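(* For every $n\ge1$ there is a one-to-one correspondence between the set of linked partitions of $[n]$ and the set of increasing trees on the $n+1$ labeled vertices $0,1,\dots,n$.
   Context: Two finite sets of integers $E,F$ are nearly disjoint if for every $i\in E\cap F$ either ($i=\min(E)$, $|E|>1$, $i\ne\min(F)$) or ($i=\min(F)$, $|F|>1$, $i\ne\min(E)$). A linked partition of $[n]$ is a set of nonempty subsets (blocks) of $[n]$ with union $[n]$, any two distinct blocks nearly disjoint (no noncrossing condition). An increasing tree on vertices $0,1,\dots,n$ is a tree rooted at $0$ in which every child has a larger label than its parent. *)

theory Defs
  imports Main
begin

definition nearly_disjoint :: "nat set \<Rightarrow> nat set \<Rightarrow> bool" where
  "nearly_disjoint E F \<longleftrightarrow>
     (\<forall>i \<in> E \<inter> F.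
        (i = Min E \<and> card E > 1 \<and> i \<noteq> Min F) \<or>
        (i = Min F \<and> card F > 1 \<and> i \<noteq> Min E))"

definition linked_partitions :: "nat \<Rightarrow> nat set set set" where
  "linked_partitions n = {P. (\<forall>B\<in>P. B \<noteq> {} \<and> B \<subseteq> {1..n}) \<and> \<Union>P = {1..n} \<and>
       (\<forall>E\<in>P. \<forall>F\<in>P. E \<noteq> F \<longrightarrow> nearly_disjoint E F)}"

definition rooted_tree :: "nat set \<Rightarrow> nat \<Rightarrow> (nat \<times> nat) set \<Rightarrow> bool" where
  "rooted_tree V r T \<longleftrightarrow> r \<in> V \<and> T \<subseteq> V \<times> V \<and>
     (\<forall>p. (p, r) \<notin> T) \<and>
     (\<forall>c\<in>V - {r}. \<exists>!p. (p, c) \<in> T) \<and>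
     (\<forall>v\<in>V. (r, v) \<in> T\<^sup>*)"

definition increasing_trees :: "nat \<Rightarrow> (nat \<times> nat) set set" where
  "increasing_trees n = {T. rooted_tree {0..n} 0 T \<and> (\<forall>(p, c)\<in>T. p < c)}"

end

theory Submission
  imports Defs
begin

definition tree_of :: "nat \<Rightarrow> nat set set \<Rightarrow> (nat \<times> nat) set" where
  "tree_of n P = {(Min B, b) | B b. B \<in> P \<and> b \<in> B \<and> b \<noteq> Min B} \<union>
     {(0, i) | i. i \<in> {1..n} \<and> \<not> (\<exists>B\<in>P. i \<in> B \<and> i \<noteq> Min B)}"

definition part_of :: "nat \<Rightarrow> (nat \<times> nat) set \<Rightarrow> nat set set" where
  "part_of n T = {insert v {c. (v, c) \<in> T} | v. v \<in> {1..n} \<and> (\<exists>c. (v, c) \<in> T)} \<union>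
     {{v} | v. v \<in> {1..n} \<and> (0, v) \<in> T \<and> \<not> (\<exists>c. (v, c) \<in> T)}"

lemma lp_block:
  assumes "P \<in> linked_partitions n" "B \<in> P"
  shows "finite B" "B \<noteq> {}" "B \<subseteq> {1..n}"
proof -
  show "B \<noteq> {}" "B \<subseteq> {1..n}" using assms unfolding linked_partitions_def by blast+
  then show "finite B" using finite_subset by blast
qed

lemma lp_nd:
  assumes "P \<in> linked_partitions n" "E \<in> P" "F \<in> P" "E \<noteq> F"
  shows "nearly_disjoint E F"
  using assms unfolding linked_partitions_def by blast

lemma nd_at:
  assumes "nearly_disjoint E F" "i \<in> E" "i \<in> F"
  shows "(i = Min E \<and> card E > 1 \<and> i \<noteq> Min F) \<or> (i = Min F \<and> card F > 1 \<and> i \<noteq> Min E)"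
  using assms unfolding nearly_disjoint_def by blast

lemma lp_nonmin:
  assumes "P \<in> linked_partitions n" "B \<in> P" "B' \<in> P" "x \<in> B" "x \<in> B'"
    "x \<noteq> Min B" "x \<noteq> Min B'"
  shows "B = B'"
proof (rule ccontr)
  assume "B \<noteq> B'"
  then have "nearly_disjoint B B'" using lp_nd assms by blast
  from nd_at[OF this assms(4,5)] assms(6,7) show False by blast
qed

lemma lp_min:
  assumes "P \<in> linked_partitions n" "B \<in> P" "B' \<in> P" "Min B = Min B'"
  shows "B = B'"
proof (rule ccontr)
  assume ne: "B \<noteq> B'"
  have "finite B" "B \<noteq> {}" "finite B'" "B' \<noteq> {}" using lp_block assms by blast+
  have "Min B \<in> B" using \<open>finite B\<close> \<open>B \<noteq> {}\<close> by (rule Min_in)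
  moreover have "Min B' \<in> B'" using \<open>finite B'\<close> \<open>B' \<noteq> {}\<close> by (rule Min_in)
  ultimately have m: "Min B \<in> B" "Min B \<in> B'" using assms(4) by auto
  have "nearly_disjoint B B'" using lp_nd assms ne by blast
  from nd_at[OF this m] assms(4) show False by simp
qed

lemma lp_single:
  assumes "P \<in> linked_partitions n" "B \<in> P" "B' \<in> P" "x \<in> B" "x \<in> B'" "B = {x}"
  shows "B = B'"
proof (rule ccontr)
  assume ne: "B \<noteq> B'"
  have "nearly_disjoint B B'" using lp_nd assms ne by blast
  from nd_at[OF this assms(4,5)] assms(6) show False by simp
qed

lemma reach:
  assumes "\<forall>c\<in>{1..n}. \<exists>p. (p, c) \<in> T \<and> p < c"
  shows "(v::nat) \<le> n \<Longrightarrow> (0, v) \<in> T\<^sup>*"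
proof (induction v rule: less_induct)
  case (less v)
  show ?case
  proof (cases "v = 0")
    case True then show ?thesis by simp
  next
    case False
    then have "v \<in> {1..n}" using less.prems by simp
    then obtain p where p: "(p, v) \<in> T" "p < v" using assms by blast
    then have "p \<le> n" using less.prems by linarith
    then have "(0, p) \<in> T\<^sup>*" using less.IH p(2) by blast
    then show ?thesis using \<open>(p, v) \<in> T\<close> by (rule rtrancl_into_rtrancl)
  qed
qed

lemma it_props:
  assumes "T \<in> increasing_trees n"
  shows "T \<subseteq> {0..n} \<times> {0..n}" "\<And>p. (p, 0) \<notin> T"
    "\<And>c. c \<in> {0..n} - {0} \<Longrightarrow> \<exists>!p. (p, c) \<in> T" "\<And>p c. (p, c) \<in> T \<Longrightarrow> p < c"
proof -
  have R: "rooted_tree {0..n} 0 T" and I: "\<forall>(p, c)\<in>T. p < c"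
    using assms unfolding increasing_trees_def by simp_all
  note R' = R[unfolded rooted_tree_def]
  from R' show "T \<subseteq> {0..n} \<times> {0..n}" by (elim conjE)
  from R' show "\<And>p. (p, 0) \<notin> T" by (elim conjE) simp
  from R' show "\<And>c. c \<in> {0..n} - {0} \<Longrightarrow> \<exists>!p. (p, c) \<in> T" by (elim conjE) (rule bspec)
  from I show "\<And>p c. (p, c) \<in> T \<Longrightarrow> p < c" by fast
qed

lemma it_edge:
  assumes "T \<in> increasing_trees n" "(p, c) \<in> T"
  shows "p < c" "p \<le> n" "c \<le> n" "c \<ge> 1"
proof -
  show "p < c" using it_props(4)[OF assms] .
  have "(p, c) \<in> {0..n} \<times> {0..n}" using it_props(1)[OF assms(1)] assms(2) by (rule subsetD)
  then show "p \<le> n" "c \<le> n" by auto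
  have "c \<noteq> 0" using it_props(2)[OF assms(1)] assms(2) by metis
  then show "c \<ge> 1" by simp
qed

lemma it_par:
  assumes "T \<in> increasing_trees n" "(p, c) \<in> T" "(p', c) \<in> T"
  shows "p = p'"
proof -
  have "c \<in> {0..n} - {0}" using it_edge[OF assms(1,2)] by auto
  then have "\<exists>!p. (p, c) \<in> T" by (rule it_props(3)[OF assms(1)])
  then show ?thesis using assms(2,3) by metis
qed

lemma it_ex:
  assumes "T \<in> increasing_trees n" "c \<in> {1..n}"
  shows "\<exists>p. (p, c) \<in> T"
proof -
  have "c \<in> {0..n} - {0}" using assms by auto
  then have "\<exists>!p. (p, c) \<in> T" by (rule it_props(3)[OF assms(1)])
  then show ?thesis by metis
qed

lemma tree_of_in:
  assumes P: "P \<in> linked_partitions n"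
  shows "tree_of n P \<in> increasing_trees n"
proof -
  let ?T = "tree_of n P"
  have edge: "p < c \<and> p \<le> n \<and> c \<le> n \<and> c \<ge> 1 \<and> (p = 0 \<or> p \<ge> 1)" if "(p, c) \<in> ?T" for p c
  proof -
    { fix B assume B: "B \<in> P" "c \<in> B" "c \<noteq> Min B" "p = Min B"
      have fin: "finite B" "B \<noteq> {}" "B \<subseteq> {1..n}" using lp_block[OF P B(1)] by auto
      then have "Min B \<le> c" "Min B \<in> B" using B by auto
      moreover have "Min B \<in> {1..n}" "c \<in> {1..n}" using fin(3) B(2) \<open>Min B \<in> B\<close> by auto
      ultimately have ?thesis using B(3,4) by auto }
    then show ?thesis using that unfolding tree_of_def by auto
  qed
  have par: "\<exists>!p. (p, c) \<in> ?T" if c: "c \<in> {0..n} - {0}" for c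
  proof (cases "\<exists>B\<in>P. c \<in> B \<and> c \<noteq> Min B")
    case True
    then obtain B where B: "B \<in> P" "c \<in> B" "c \<noteq> Min B" by blast
    have "(Min B, c) \<in> ?T" using B unfolding tree_of_def by blast
    moreover have "p = Min B" if pc: "(p, c) \<in> ?T" for p
    proof -
      obtain B' where "B' \<in> P" "c \<in> B'" "c \<noteq> Min B'" "p = Min B'"
        using pc True unfolding tree_of_def by blast
      then show ?thesis using lp_nonmin[OF P B(1) _ B(2) _ B(3)] by auto
    qed
    ultimately show ?thesis by blast
  next
    case False
    have "(0, c) \<in> ?T" using False c unfolding tree_of_def by auto
    moreover have "p = 0" if "(p, c) \<in> ?T" for p
      using that False unfolding tree_of_def by auto
    ultimately show ?thesis by blast
  qed
  have "\<forall>c\<in>{1..n}. \<exists>p. (p, c) \<in> ?T \<and> p < c"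
  proof
    fix c assume "c \<in> {1..n}"
    then obtain p where "(p, c) \<in> ?T" using par[of c] by auto
    then show "\<exists>p. (p, c) \<in> ?T \<and> p < c" using edge by blast
  qed
  then have "(0, v) \<in> ?T\<^sup>*" if "v \<in> {0..n}" for v using reach that by auto
  moreover have "?T \<subseteq> {0..n} \<times> {0..n}" using edge by fastforce
  moreover have "(p, 0) \<notin> ?T" for p using edge by fastforce
  ultimately show ?thesis unfolding increasing_trees_def rooted_tree_def
    using par edge by auto
qed

lemma part_of_in:
  assumes T: "T \<in> increasing_trees n"
  shows "part_of n T \<in> linked_partitions n"
proof -
  let ?P = "part_of n T"
  define A where "A v = insert v {c. (v, c) \<in> T}" for v
  have finA: "finite (A v)" for v
  proof -
    have "A v \<subseteq> insert v {0..n}" unfolding A_def using it_edge[OF T] by auto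
    then show ?thesis by (rule finite_subset) simp
  qed
  have minA: "Min (A v) = v" for v
  proof -
    have "v \<le> x" if "x \<in> A v" for x using that it_edge[OF T] unfolding A_def by fastforce
    then show ?thesis using finA by (intro Min_eqI) (auto simp: A_def)
  qed
  have cardA: "card (A v) > 1" if "(v, c) \<in> T" for v c
  proof -
    have "v \<noteq> c" using it_edge[OF T that] by simp
    then have "{v, c} \<subseteq> A v" using that unfolding A_def by auto
    then have "card {v, c} \<le> card (A v)" using finA by (intro card_mono) auto
    then show ?thesis using \<open>v \<noteq> c\<close> by simp
  qed
  have PA: "?P = {A v | v. v \<in> {1..n} \<and> (\<exists>c. (v, c) \<in> T)} \<union>
     {{v} | v. v \<in> {1..n} \<and> (0, v) \<in> T \<and> \<not> (\<exists>c. (v, c) \<in> T)}"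
    unfolding part_of_def A_def by simp
  have Asub: "A v \<subseteq> {1..n}" if "v \<in> {1..n}" for v
  proof
    fix x assume "x \<in> A v"
    then have "x = v \<or> (v, x) \<in> T" unfolding A_def by blast
    then show "x \<in> {1..n}"
    proof
      assume "(v, x) \<in> T"
      then show ?thesis using it_edge[OF T] by fastforce
    qed (use that in simp)
  qed
  have blocks: "B \<noteq> {} \<and> B \<subseteq> {1..n}" if B: "B \<in> ?P" for B
  proof -
    from B consider (a) v where "B = A v" "v \<in> {1..n}" | (s) v where "B = {v}" "v \<in> {1..n}"
      unfolding PA by blast
    then show ?thesis
    proof cases
      case a then show ?thesis using Asub unfolding A_def by blast
    next
      case s then show ?thesis by blast
    qed
  qed
  have cover: "\<Union>?P = {1..n}"
  proof
    show "\<Union>?P \<subseteq> {1..n}" using blocks by blast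
  next
    show "{1..n} \<subseteq> \<Union>?P"
    proof
      fix c assume c: "c \<in> {1..n}"
      show "c \<in> \<Union>?P"
      proof (cases "\<exists>d. (c, d) \<in> T")
        case True
        then have "A c \<in> ?P" using c unfolding PA by blast
        then show ?thesis unfolding A_def by blast
      next
        case False
        obtain p where p: "(p, c) \<in> T" using it_ex[OF T c] by blast
        show ?thesis
        proof (cases "p = 0")
          case True
          then have "{c} \<in> ?P" using c p False unfolding PA by blast
          then show ?thesis by blast
        next
          case False
          then have "p \<in> {1..n}" using it_edge[OF T p] by auto
          then have "A p \<in> ?P" using p unfolding PA by blast
          then show ?thesis using p unfolding A_def by blast
        qed
      qed
    qed
  qed
  have nd: "nearly_disjoint E F" if E: "E \<in> ?P" and F: "F \<in> ?P" and ne: "E \<noteq> F" for E F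
  proof -
    have AA: "nearly_disjoint (A v) (A w)" if "v \<noteq> w" "(v, c) \<in> T" "(w, d) \<in> T" for v w c d
      unfolding nearly_disjoint_def minA
    proof
      fix i assume i: "i \<in> A v \<inter> A w"
      show "i = v \<and> 1 < card (A v) \<and> i \<noteq> w \<or> i = w \<and> 1 < card (A w) \<and> i \<noteq> v"
      proof (cases "i = v")
        case True then show ?thesis using cardA that by auto
      next
        case False
        then have iv: "(v, i) \<in> T" using i unfolding A_def by auto
        show ?thesis
        proof (cases "i = w")
          case True then show ?thesis using cardA that False by auto
        next
          case False
          then have "(w, i) \<in> T" using i unfolding A_def by auto
          then show ?thesis using it_par[OF T iv] that by auto
        qed
      qed
    qed
    have AS: "A v \<inter> {w} = {}" if "(v, c) \<in> T" "(0, w) \<in> T" "\<not> (\<exists>c. (w, c) \<in> T)" "v \<in> {1..n}"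
      for v w c
    proof -
      have "w \<noteq> v" using that by auto
      moreover have "(v, w) \<notin> T" using it_par[OF T _ that(2)] that(4) by fastforce
      ultimately show ?thesis unfolding A_def by auto
    qed
    have sym: "nearly_disjoint X Y \<Longrightarrow> nearly_disjoint Y X" for X Y
      unfolding nearly_disjoint_def by blast
    have disj: "X \<inter> Y = {} \<Longrightarrow> nearly_disjoint X Y" for X Y
      unfolding nearly_disjoint_def by blast
    from E consider (a) v c where "E = A v" "v \<in> {1..n}" "(v, c) \<in> T"
      | (s) v where "E = {v}" "v \<in> {1..n}" "(0, v) \<in> T" "\<not> (\<exists>c. (v, c) \<in> T)"
      unfolding PA by blast
    note cE = this
    from F consider (a) w d where "F = A w" "w \<in> {1..n}" "(w, d) \<in> T"
      | (s) w where "F = {w}" "w \<in> {1..n}" "(0, w) \<in> T" "\<not> (\<exists>c. (w, c) \<in> T)"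
      unfolding PA by blast
    note cF = this
    show ?thesis
    proof (cases rule: cE)
      case (a v c)
      show ?thesis
      proof (cases rule: cF)
        case (a w d)
        then have "v \<noteq> w" using ne \<open>E = A v\<close> by blast
        then show ?thesis using AA \<open>(v, c) \<in> T\<close> a \<open>E = A v\<close> by blast
      next
        case (s w)
        have "E \<inter> F = {}" using AS[of v c w] s a by blast
        then show ?thesis by (rule disj)
      qed
    next
      case (s v)
      show ?thesis
      proof (cases rule: cF)
        case (a w d)
        have "F \<inter> E = {}" using AS[of w d v] s a by blast
        then show ?thesis using disj by (metis inf_commute)
      next
        case s2: (s w)
        then have "E \<inter> F = {}" using s ne by blast
        then show ?thesis by (rule disj)
      qed
    qed
  qed
  show ?thesis unfolding linked_partitions_def using blocks cover nd by blast
qed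

definition ch :: "(nat \<times> nat) set \<Rightarrow> nat \<Rightarrow> nat set" where
  "ch T v = insert v {c. (v, c) \<in> T}"

lemma ch_min:
  assumes T: "T \<in> increasing_trees n"
  shows "Min (ch T v) = v"
proof -
  have "ch T v \<subseteq> insert v {0..n}" unfolding ch_def using it_edge[OF T] by auto
  then have fin: "finite (ch T v)" by (rule finite_subset) simp
  have "v \<le> x" if "x \<in> ch T v" for x using that it_edge[OF T] unfolding ch_def by fastforce
  then show ?thesis using fin by (intro Min_eqI) (auto simp: ch_def)
qed

lemma part_of_alt:
  "part_of n T = {ch T v | v. v \<in> {1..n} \<and> (\<exists>c. (v, c) \<in> T)} \<union>
     {{v} | v. v \<in> {1..n} \<and> (0, v) \<in> T \<and> \<not> (\<exists>c. (v, c) \<in> T)}"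
  unfolding part_of_def ch_def by simp

lemma lp_minB:
  assumes "P \<in> linked_partitions n" "B \<in> P"
  shows "Min B \<in> B" "Min B \<in> {1..n}"
proof -
  show "Min B \<in> B" using lp_block[OF assms] by (intro Min_in) auto
  then show "Min B \<in> {1..n}" using lp_block[OF assms] by blast
qed

lemma tree_of_edge:
  assumes P: "P \<in> linked_partitions n" and v: "v \<ge> 1"
  shows "(v, c) \<in> tree_of n P \<longleftrightarrow> (\<exists>B\<in>P. Min B = v \<and> c \<in> B \<and> c \<noteq> v)"
  using v unfolding tree_of_def by auto

lemma tree_of_root:
  assumes P: "P \<in> linked_partitions n"
  shows "(0, c) \<in> tree_of n P \<longleftrightarrow> c \<in> {1..n} \<and> \<not> (\<exists>B\<in>P. c \<in> B \<and> c \<noteq> Min B)"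
proof -
  have h: "\<forall>B\<in>P. Min B \<noteq> 0" using lp_minB(2)[OF P] by fastforce
  have "(0, c) \<notin> {(Min B, b) | B b. B \<in> P \<and> b \<in> B \<and> b \<noteq> Min B}" using h by auto
  then show ?thesis unfolding tree_of_def by blast
qed

lemma g_f:
  assumes P: "P \<in> linked_partitions n"
  shows "part_of n (tree_of n P) = P"
proof -
  let ?T = "tree_of n P"
  have chB: "ch ?T (Min B) = B" if B: "B \<in> P" for B
  proof
    have m: "Min B \<in> B" "Min B \<in> {1..n}" using lp_minB[OF P B] by auto
    show "ch ?T (Min B) \<subseteq> B"
    proof
      fix x assume "x \<in> ch ?T (Min B)"
      then have "x = Min B \<or> (Min B, x) \<in> ?T" unfolding ch_def by blast
      then show "x \<in> B"
      proof
        assume "(Min B, x) \<in> ?T"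
        then obtain B' where "B' \<in> P" "Min B' = Min B" "x \<in> B'"
          using tree_of_edge[OF P, of "Min B" x] m by auto
        then show ?thesis using lp_min[OF P B] by metis
      qed (use m in simp)
    qed
    show "B \<subseteq> ch ?T (Min B)"
    proof
      fix x assume x: "x \<in> B"
      show "x \<in> ch ?T (Min B)"
      proof (cases "x = Min B")
        case False
        then have "(Min B, x) \<in> ?T" using tree_of_edge[OF P, of "Min B" x] m x B by auto
        then show ?thesis unfolding ch_def by simp
      qed (simp add: ch_def)
    qed
  qed
  show ?thesis
  proof
    show "part_of n ?T \<subseteq> P"
    proof
      fix X assume "X \<in> part_of n ?T"
      then consider (a) v c where "X = ch ?T v" "v \<in> {1..n}" "(v, c) \<in> ?T"
        | (s) v where "X = {v}" "v \<in> {1..n}" "(0, v) \<in> ?T" "\<not> (\<exists>c. (v, c) \<in> ?T)"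
        unfolding part_of_alt by blast
      then show "X \<in> P"
      proof cases
        case (a v c)
        then obtain B where "B \<in> P" "Min B = v"
          using tree_of_edge[OF P, of v c] by auto
        then show ?thesis using chB a by metis
      next
        case (s v)
        have "v \<in> \<Union>P" using s(2) P unfolding linked_partitions_def by blast
        then obtain B where B: "B \<in> P" "v \<in> B" by blast
        have vm: "v = Min B" using s(3) B tree_of_root[OF P, of v] by auto
        have "B = {v}"
        proof (rule ccontr)
          assume "B \<noteq> {v}"
          then obtain x where "x \<in> B" "x \<noteq> v" using B by blast
          then have "(v, x) \<in> ?T" using tree_of_edge[OF P, of v x] B vm s(2) by auto
          then show False using s(4) by blast
        qed
        then show ?thesis using s(1) B by simp
      qed
    qed
  next
    show "P \<subseteq> part_of n ?T"
    proof
      fix B assume B: "B \<in> P"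
      define m where "m = Min B"
      have m: "m \<in> B" "m \<in> {1..n}" using lp_minB[OF P B] m_def by auto
      show "B \<in> part_of n ?T"
      proof (cases "B = {m}")
        case True
        have r: "(0, m) \<in> ?T"
        proof -
          have "m = Min B'" if "B' \<in> P" "m \<in> B'" for B'
          proof -
            have "B = B'" using lp_single[OF P B that(1) m(1) that(2) True] .
            then show ?thesis using m_def by simp
          qed
          then have "\<not> (\<exists>B'\<in>P. m \<in> B' \<and> m \<noteq> Min B')" by blast
          then show ?thesis using tree_of_root[OF P, of m] m(2) by simp
        qed
        have nc: "\<not> (\<exists>c. (m, c) \<in> ?T)"
        proof
          assume "\<exists>c. (m, c) \<in> ?T"
          then obtain c where "(m, c) \<in> ?T" by blast
          then have "\<exists>B'\<in>P. Min B' = m \<and> c \<in> B' \<and> c \<noteq> m"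
            using tree_of_edge[OF P, of m c] m(2) by simp
          then obtain B' where "B' \<in> P" "Min B' = m" "c \<in> B'" "c \<noteq> m" by blast
          then have "Min B = Min B'" using m_def by simp
          then have "B = B'" by (rule lp_min[OF P B \<open>B' \<in> P\<close>])
          then show False using True \<open>c \<in> B'\<close> \<open>c \<noteq> m\<close> by blast
        qed
        have "{m} \<in> {{v} | v. v \<in> {1..n} \<and> (0, v) \<in> ?T \<and> \<not> (\<exists>c. (v, c) \<in> ?T)}"
          using r nc m(2) by blast
        then show ?thesis unfolding part_of_alt using True by simp
      next
        case False
        then obtain c where c: "c \<in> B" "c \<noteq> m" using m by blast
        then have "(m, c) \<in> ?T" using tree_of_edge[OF P, of m c] B m m_def by auto
        then have "ch ?T m \<in> {ch ?T v | v. v \<in> {1..n} \<and> (\<exists>c. (v, c) \<in> ?T)}"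
          using m(2) by blast
        then show ?thesis unfolding part_of_alt using chB[OF B] m_def by simp
      qed
    qed
  qed
qed

lemma f_g:
  assumes T: "T \<in> increasing_trees n"
  shows "tree_of n (part_of n T) = T"
proof -
  let ?P = "part_of n T"
  have cases: "(\<exists>v c. X = ch T v \<and> v \<in> {1..n} \<and> (v, c) \<in> T) \<or>
      (\<exists>v. X = {v} \<and> v \<in> {1..n} \<and> (0, v) \<in> T)" if "X \<in> ?P" for X
    using that unfolding part_of_alt by blast
  have chP: "ch T v \<in> ?P" if "v \<in> {1..n}" "(v, c) \<in> T" for v c
    using that unfolding part_of_alt by blast
  show ?thesis
  proof
    show "tree_of n ?P \<subseteq> T"
    proof
      fix e assume e: "e \<in> tree_of n ?P"
      then consider (a) B b where "e = (Min B, b)" "B \<in> ?P" "b \<in> B" "b \<noteq> Min B"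
        | (r) i where "e = (0, i)" "i \<in> {1..n}" "\<not> (\<exists>B\<in>?P. i \<in> B \<and> i \<noteq> Min B)"
        unfolding tree_of_def by blast
      then show "e \<in> T"
      proof cases
        case (a B b)
        from cases[OF a(2)] show ?thesis
        proof
          assume "\<exists>v c. B = ch T v \<and> v \<in> {1..n} \<and> (v, c) \<in> T"
          then obtain v where "B = ch T v" by blast
          then show ?thesis using a ch_min[OF T, of v] unfolding ch_def by auto
        next
          assume "\<exists>v. B = {v} \<and> v \<in> {1..n} \<and> (0, v) \<in> T"
          then show ?thesis using a by auto
        qed
      next
        case (r i)
        obtain p where p: "(p, i) \<in> T" using it_ex[OF T r(2)] by blast
        have "p = 0"
        proof (rule ccontr)
          assume "p \<noteq> 0"
          then have pv: "p \<in> {1..n}" using it_edge[OF T p] by auto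
          have "i \<in> ch T p" "i \<noteq> Min (ch T p)" using p ch_min[OF T, of p] it_edge[OF T p]
            unfolding ch_def by auto
          then show False using r(3) chP[OF pv p] by blast
        qed
        then show ?thesis using p r(1) by simp
      qed
    qed
  next
    show "T \<subseteq> tree_of n ?P"
    proof
      fix e assume e: "e \<in> T"
      obtain p c where pc: "e = (p, c)" by fastforce
      have pcT: "(p, c) \<in> T" using e pc by simp
      show "e \<in> tree_of n ?P"
      proof (cases "p = 0")
        case False
        then have pv: "p \<in> {1..n}" using it_edge[OF T pcT] by auto
        have "c \<in> ch T p" "c \<noteq> Min (ch T p)" using pcT ch_min[OF T, of p] it_edge[OF T pcT]
          unfolding ch_def by auto
        then have "(Min (ch T p), c) \<in> tree_of n ?P" using chP[OF pv pcT] unfolding tree_of_def by blast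
        then show ?thesis using pc ch_min[OF T, of p] by simp
      next
        case True
        have cv: "c \<in> {1..n}" using it_edge[OF T pcT] by auto
        have "\<not> (c \<in> B \<and> c \<noteq> Min B)" if B: "B \<in> ?P" for B
        proof
          assume cB: "c \<in> B \<and> c \<noteq> Min B"
          from cases[OF B] show False
          proof
            assume "\<exists>v d. B = ch T v \<and> v \<in> {1..n} \<and> (v, d) \<in> T"
            then obtain v where v: "B = ch T v" "v \<in> {1..n}" by blast
            then have "(v, c) \<in> T" using cB ch_min[OF T, of v] unfolding ch_def by auto
            then have "v = p" using it_par[OF T _ pcT] by blast
            then show False using True v by simp
          next
            assume "\<exists>v. B = {v} \<and> v \<in> {1..n} \<and> (0, v) \<in> T"
            then show False using cB by auto
          qed
        qed
        then show ?thesis using pc True cv unfolding tree_of_def by blast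
      qed
    qed
  qed
qed

theorem theorem3p2:
  fixes n :: nat
  assumes "n \<ge> 1"
  shows "\<exists>f. bij_betw f (linked_partitions n) (increasing_trees n)"
proof
  show "bij_betw (tree_of n) (linked_partitions n) (increasing_trees n)"
    by (rule bij_betw_byWitness[where f' = "part_of n"])
       (auto simp: g_f f_g tree_of_in part_of_in)
qed

end
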